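(* Let $A\in\mathbb{R}^{m\times n}_{\geq 0}$ be a matrix each of whose columns has at least one positive entry, and consider the covering LP $\min_{x\geq 0}\{\vec{1}^Tx : Ax\geq \vec{1}\}$ with optimal value $\mathrm{OPT}$. For each $i\in[n]$ let $a_i=\min_j\{A_{ji}:A_{ji}>0\}$, $r_i=\max_j\{A_{ji}:A_{ji}>0\}/a_i$, and $n_i=\max\{1,\lceil \log_2 r_i\rceil\}$. Define a new matrix $\bar{A}\in\mathbb{R}^{m\times(\sum_i n_i)}_{\geq 0}$ whose columns are indexed by pairs $(i,l)$ with $i\in[n]$, $l\in[n_i]$, by $$\bar{A}_{j,(i,l)}=\min\{A_{ji},\,2^l a_i\}.$$ Let $\overline{\mathrm{OPT}}$ be the optimal value of the LP $$\min\Big\{\sum_{i,l}\bar{x}_{(i,l)} \;:\; \bar{A}\bar{x}\geq\vec{1},\ \bar{x}\geq 0,\ \bar{x}_{(i,l)}\leq \frac{2}{2^l a_i}\ \text{for all } i\in[n],\ l\in[n_i]\Big\}.$$ Then $\mathrm{OPT}=\overline{\mathrm{OPT}}$.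
   Context: $\vec{1}$ denotes the all-ones vector. The new LP is obtained by duplicating column $i$ of $A$ $n_i$ times, capping the coefficients of the $l$-th copy at $2^l a_i$, and imposing an upper bound on each copied variable. *)

theory Defs
  imports Complex_Main "HOL-Library.Extended_Real"
begin

text \<open>Matrices A are functions nat => nat => real, entry A j i for row j < m, column i < n.
  Optimal values are taken in ereal (infimum of the empty set is +infinity).\<close>

definition cover_opt :: "nat \<Rightarrow> nat \<Rightarrow> (nat \<Rightarrow> nat \<Rightarrow> real) \<Rightarrow> ereal" where
  "cover_opt m n A = Inf {ereal (\<Sum>i<n. x i) | x :: nat \<Rightarrow> real.
      (\<forall>i<n. x i \<ge> 0) \<and> (\<forall>j<m. (\<Sum>i<n. A j i * x i) \<ge> 1)}"

definition col_min :: "nat \<Rightarrow> (nat \<Rightarrow> nat \<Rightarrow> real) \<Rightarrow> nat \<Rightarrow> real" where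
  "col_min m A i = Min {A j i | j. j < m \<and> A j i > 0}"

definition col_ratio :: "nat \<Rightarrow> (nat \<Rightarrow> nat \<Rightarrow> real) \<Rightarrow> nat \<Rightarrow> real" where
  "col_ratio m A i = Max {A j i | j. j < m \<and> A j i > 0} / col_min m A i"

definition col_copies :: "nat \<Rightarrow> (nat \<Rightarrow> nat \<Rightarrow> real) \<Rightarrow> nat \<Rightarrow> nat" where
  "col_copies m A i = nat (max 1 \<lceil>log 2 (col_ratio m A i)\<rceil>)"

definition bar_idx :: "nat \<Rightarrow> nat \<Rightarrow> (nat \<Rightarrow> nat \<Rightarrow> real) \<Rightarrow> (nat \<times> nat) set" where
  "bar_idx m n A = {(i, l). i < n \<and> 1 \<le> l \<and> l \<le> col_copies m A i}"

definition bar_A :: "nat \<Rightarrow> (nat \<Rightarrow> nat \<Rightarrow> real) \<Rightarrow> nat \<Rightarrow> nat \<times> nat \<Rightarrow> real" where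
  "bar_A m A j il = min (A j (fst il)) (2 ^ snd il * col_min m A (fst il))"

definition bar_opt :: "nat \<Rightarrow> nat \<Rightarrow> (nat \<Rightarrow> nat \<Rightarrow> real) \<Rightarrow> ereal" where
  "bar_opt m n A = Inf {ereal (\<Sum>p\<in>bar_idx m n A. x p) | x :: nat \<times> nat \<Rightarrow> real.
      (\<forall>p\<in>bar_idx m n A. 0 \<le> x p \<and> x p \<le> 2 / (2 ^ snd p * col_min m A (fst p))) \<and>
      (\<forall>j<m. (\<Sum>p\<in>bar_idx m n A. bar_A m A j p * x p) \<ge> 1)}"

end

theory Submission
  imports Defs
begin

lemma col_lemma:
  fixes a t :: real and N :: nat
  assumes a: "a > 0" and N: "N \<ge> 1" and t: "t \<ge> 0"
  shows "\<exists>l s. 1 \<le> l \<and> l \<le> N \<and> 0 \<le> s \<and> s \<le> t \<and> s \<le> 2 / (2 ^ l * a) \<and>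
     (\<forall>c. (c = 0 \<or> (a \<le> c \<and> c \<le> 2 ^ N * a)) \<longrightarrow> min (c * t) 1 \<le> min c (2 ^ l * a) * s)"
proof -
  define u where "u = min t (1 / a)"
  have u0: "0 \<le> u" using t a by (simp add: u_def)
  have ut: "u \<le> t" "u \<le> 1/a" by (auto simp: u_def)
  have uat: "u = t \<or> u = 1/a" by (auto simp: u_def)
  define S where "S = {l. 1 \<le> l \<and> l \<le> N \<and> 2 ^ l * a * u \<le> (2::real)}"
  have au1: "u * a \<le> 1" using ut(2) a by (simp add: pos_le_divide_eq)
  have "1 \<in> S" using N au1 by (simp add: S_def mult.commute mult.left_commute)
  have fS: "finite S" by (rule finite_subset[of _ "{..N}"]) (auto simp: S_def)
  define l where "l = Max S"
  have lS: "l \<in> S" unfolding l_def using \<open>1 \<in> S\<close> by (intro Max_in[OF fS]) auto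
  have l1: "1 \<le> l" "l \<le> N" and lu: "2 ^ l * a * u \<le> 2" using lS by (auto simp: S_def)
  have lnext: "l < N \<Longrightarrow> 2 ^ (l+1) * a * u > 2"
  proof (rule ccontr)
    assume "l < N" "\<not> 2 ^ (l+1) * a * u > 2"
    then have "l+1 \<in> S" by (auto simp: S_def)
    then have "l + 1 \<le> l" unfolding l_def by (rule Max_ge[OF fS])
    then show False by simp
  qed
  have pos: "(2::real) ^ l * a > 0" using a by simp
  have sb: "u \<le> 2 / (2 ^ l * a)" using lu pos by (simp add: pos_le_divide_eq mult.commute)
  show ?thesis
  proof (intro exI conjI allI impI)
    show "1 \<le> l" "l \<le> N" "0 \<le> u" "u \<le> t" "u \<le> 2 / (2 ^ l * a)" using l1 u0 ut sb by auto
    fix c :: real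
    assume c: "c = 0 \<or> (a \<le> c \<and> c \<le> 2 ^ N * a)"
    show "min (c * t) 1 \<le> min c (2 ^ l * a) * u"
    proof (cases "c = 0")
      case True then show ?thesis using pos u0 by simp
    next
      case False
      with c have ca: "a \<le> c" "c \<le> 2 ^ N * a" by auto
      show ?thesis
      proof (cases "c \<le> 2 ^ l * a")
        case True
        then have m: "min c (2 ^ l * a) = c" by simp
        from uat show ?thesis
        proof
          assume "u = t" then show ?thesis using m by simp
        next
          assume "u = 1/a"
          then have au: "a * u = 1" using a by simp
          have "c * u \<ge> a * u" by (rule mult_right_mono[OF ca(1) u0])
          then have "c * u \<ge> 1" using au by simp
          then show ?thesis using m by simp
        qed
      next
        case False
        then have m: "min c (2 ^ l * a) = 2 ^ l * a" by simp
        have "l < N"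
        proof (rule ccontr)
          assume "\<not> l < N"
          then have "l = N" using l1 by simp
          then show False using False ca by simp
        qed
        then have "2 ^ (l+1) * a * u > 2" by (rule lnext)
        then have "2 ^ l * a * u > 1" by simp
        then show ?thesis using m by (simp add: mult.assoc)
      qed
    qed
  qed
qed

lemma col_bound:
  assumes pi: "\<exists>j<m. A j i > 0"
  shows "col_min m A i > 0" "col_copies m A i \<ge> 1"
    "\<And>j. j < m \<Longrightarrow> A j i > 0 \<Longrightarrow> col_min m A i \<le> A j i \<and> A j i \<le> 2 ^ col_copies m A i * col_min m A i"
proof -
  define T where "T = {A j i | j. j < m \<and> A j i > 0}"
  have fT: "finite T" unfolding T_def by simp
  obtain j0 where j0: "j0 < m" "A j0 i > 0" using pi by blast
  have neT: "T \<noteq> {}" using j0 by (auto simp: T_def)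
  have Tpos: "\<And>x. x \<in> T \<Longrightarrow> x > 0" by (auto simp: T_def)
  have amin: "col_min m A i = Min T" by (simp add: col_min_def T_def)
  show apos: "col_min m A i > 0" using Min_in[OF fT neT] Tpos amin by auto
  show N1: "col_copies m A i \<ge> 1" by (simp add: col_copies_def)
  fix j assume j: "j < m" "A j i > 0"
  then have jT: "A j i \<in> T" by (auto simp: T_def)
  show "col_min m A i \<le> A j i \<and> A j i \<le> 2 ^ col_copies m A i * col_min m A i"
  proof
    show "col_min m A i \<le> A j i" using Min_le[OF fT jT] amin by simp
    define r where "r = col_ratio m A i"
    have rdef: "r = Max T / col_min m A i" by (simp add: r_def col_ratio_def T_def)
    have mx: "A j i \<le> Max T" using Max_ge[OF fT jT] .
    have "Max T > 0" using mx j by linarith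
    then have rpos: "r > 0" unfolding rdef using apos by (rule divide_pos_pos)
    have c1: "log 2 r \<le> real_of_int \<lceil>log 2 r\<rceil>" by (rule le_of_int_ceiling)
    have c2: "real_of_int \<lceil>log 2 r\<rceil> \<le> real_of_int (max 1 \<lceil>log 2 r\<rceil>)" by simp
    have c3: "real (col_copies m A i) = real_of_int (max 1 \<lceil>log 2 r\<rceil>)"
      unfolding col_copies_def r_def by simp
    have "log 2 r \<le> real (col_copies m A i)" using c1 c2 c3 by linarith
    then have "2 powr (log 2 r) \<le> 2 powr real (col_copies m A i)"
      by (intro powr_mono) auto
    then have "r \<le> 2 ^ col_copies m A i" using rpos by (simp add: powr_realpow)
    then have "Max T \<le> 2 ^ col_copies m A i * col_min m A i"
      using rdef apos by (simp add: field_simps)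
    then show "A j i \<le> 2 ^ col_copies m A i * col_min m A i" using mx by simp
  qed
qed

lemma bar_idx_Sigma: "bar_idx m n A = Sigma {..<n} (\<lambda>i. {1..col_copies m A i})"
  by (auto simp: bar_idx_def)

lemma sum_min1:
  fixes g :: "nat \<Rightarrow> real"
  assumes "\<And>i. i < n \<Longrightarrow> g i \<ge> 0" "(\<Sum>i<n. g i) \<ge> 1"
  shows "(\<Sum>i<n. min (g i) 1) \<ge> 1"
proof (cases "\<exists>i<n. g i \<ge> 1")
  case True
  then obtain i where i: "i < n" "g i \<ge> 1" by blast
  have "min (g i) 1 \<le> (\<Sum>i<n. min (g i) 1)"
    by (rule member_le_sum) (use i assms in auto)
  then show ?thesis using i by simp
next
  case False
  then have "(\<Sum>i<n. min (g i) 1) = (\<Sum>i<n. g i)" by (intro sum.cong) auto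
  then show ?thesis using assms by simp
qed

lemma sum_bar: "(\<Sum>p\<in>bar_idx m n A. g p) = (\<Sum>i<n. \<Sum>l\<in>{1..col_copies m A i}. g (i,l))"
proof -
  have "(\<Sum>i<n. \<Sum>l\<in>{1..col_copies m A i}. g (i,l)) = (\<Sum>(i,l)\<in>Sigma {..<n} (\<lambda>i. {1..col_copies m A i}). g (i,l))"
    by (rule sum.Sigma) auto
  then show ?thesis unfolding bar_idx_Sigma by simp
qed

theorem lemma1:
  fixes m n :: nat and A :: "nat \<Rightarrow> nat \<Rightarrow> real"
  assumes nn: "\<And>j i. j < m \<Longrightarrow> i < n \<Longrightarrow> A j i \<ge> 0"
    and pos: "\<And>i. i < n \<Longrightarrow> \<exists>j<m. A j i > 0"
  shows "cover_opt m n A = bar_opt m n A"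
proof -
  show ?thesis
proof (rule antisym)
  show "cover_opt m n A \<le> bar_opt m n A"
    unfolding bar_opt_def
  proof (rule Inf_greatest, clarify)
    fix xb :: "nat \<times> nat \<Rightarrow> real"
    assume xb: "\<forall>p\<in>bar_idx m n A. 0 \<le> xb p \<and> xb p \<le> 2 / (2 ^ snd p * col_min m A (fst p))"
      and rows: "\<forall>j<m. 1 \<le> (\<Sum>p\<in>bar_idx m n A. bar_A m A j p * xb p)"
    define x where "x i = (\<Sum>l\<in>{1..col_copies m A i}. xb (i, l))" for i
    have cost: "(\<Sum>p\<in>bar_idx m n A. xb p) = (\<Sum>i<n. x i)"
      unfolding sum_bar x_def ..
    have "ereal (\<Sum>i<n. x i) \<in> {ereal (\<Sum>i<n. x i) | x :: nat \<Rightarrow> real.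
      (\<forall>i<n. x i \<ge> 0) \<and> (\<forall>j<m. (\<Sum>i<n. A j i * x i) \<ge> 1)}"
    proof (intro CollectI exI[of _ x] conjI allI impI refl)
      fix i assume i: "i < n"
      show "0 \<le> x i" unfolding x_def using xb i
        by (intro sum_nonneg) (auto simp: bar_idx_def)
    next
      fix j assume j: "j < m"
      have "1 \<le> (\<Sum>p\<in>bar_idx m n A. bar_A m A j p * xb p)" using rows j by auto
      also have "\<dots> \<le> (\<Sum>p\<in>bar_idx m n A. A j (fst p) * xb p)"
        using xb by (intro sum_mono mult_right_mono) (auto simp: bar_A_def)
      also have "\<dots> = (\<Sum>i<n. A j i * x i)"
        unfolding sum_bar x_def by (simp add: sum_distrib_left)
      finally show "1 \<le> (\<Sum>i<n. A j i * x i)" .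
    qed
    then show "cover_opt m n A \<le> ereal (\<Sum>p\<in>bar_idx m n A. xb p)"
      unfolding cover_opt_def cost by (rule Inf_lower)
  qed
next
  show "bar_opt m n A \<le> cover_opt m n A"
    unfolding cover_opt_def
  proof (rule Inf_greatest, clarify)
    fix x :: "nat \<Rightarrow> real"
    assume x0: "\<forall>i<n. 0 \<le> x i" and rows: "\<forall>j<m. 1 \<le> (\<Sum>i<n. A j i * x i)"
    define Q where "Q i l s \<longleftrightarrow> (1 \<le> l \<and> l \<le> col_copies m A i \<and> 0 \<le> s \<and> s \<le> x i \<and>
       s \<le> 2 / (2 ^ l * col_min m A i) \<and>
     (\<forall>c. (c = 0 \<or> (col_min m A i \<le> c \<and> c \<le> 2 ^ col_copies m A i * col_min m A i)) \<longrightarrow>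
        min (c * x i) 1 \<le> min c (2 ^ l * col_min m A i) * s))" for i l s
    have "\<forall>i. \<exists>p. i < n \<longrightarrow> Q i (fst p) (snd p)"
    proof (intro allI)
      fix i
      show "\<exists>p. i < n \<longrightarrow> Q i (fst p) (snd p)"
      proof (cases "i < n")
        case True
        have xi: "0 \<le> x i" using x0 True by simp
        have "\<exists>l s. Q i l s" unfolding Q_def
          by (rule col_lemma[OF col_bound(1)[of m A i, OF pos[OF True]] col_bound(2)[of m A i, OF pos[OF True]] xi])
        then obtain l s where "Q i l s" by blast
        then show ?thesis by (intro exI[of _ "(l, s)"]) simp
      qed simp
    qed
    then have "\<exists>P. \<forall>i. i < n \<longrightarrow> Q i (fst (P i)) (snd (P i))" by (rule choice)
    then obtain P where P: "\<And>i. i < n \<Longrightarrow> Q i (fst (P i)) (snd (P i))" by blast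
    define L where "L i = fst (P i)" for i
    define S where "S i = snd (P i)" for i
    have LS: "\<And>i. i < n \<Longrightarrow> 1 \<le> L i \<and> L i \<le> col_copies m A i \<and> 0 \<le> S i \<and> S i \<le> x i \<and>
       S i \<le> 2 / (2 ^ L i * col_min m A i) \<and>
     (\<forall>c. (c = 0 \<or> (col_min m A i \<le> c \<and> c \<le> 2 ^ col_copies m A i * col_min m A i)) \<longrightarrow>
        min (c * x i) 1 \<le> min c (2 ^ L i * col_min m A i) * S i)"
      using P unfolding Q_def L_def S_def by blast
    define xb where "xb p = (if snd p = L (fst p) then S (fst p) else 0)" for p
    have red: "(\<Sum>p\<in>bar_idx m n A. f p * xb p) = (\<Sum>i<n. f (i, L i) * S i)" for f
      unfolding sum_bar
    proof (rule sum.cong[OF refl])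
      fix i assume "i \<in> {..<n}"
      then have "L i \<in> {1..col_copies m A i}" using LS by auto
      have "(\<Sum>l\<in>{1..col_copies m A i}. f (i,l) * xb (i,l))
          = (\<Sum>l\<in>{1..col_copies m A i}. if l = L i then f (i, L i) * S i else 0)"
        by (rule sum.cong) (auto simp: xb_def)
      then show "(\<Sum>l\<in>{1..col_copies m A i}. f (i,l) * xb (i,l)) = f (i, L i) * S i"
        using \<open>L i \<in> {1..col_copies m A i}\<close> by (simp add: sum.delta)
    qed
    have mem: "ereal (\<Sum>p\<in>bar_idx m n A. xb p) \<in> {ereal (\<Sum>p\<in>bar_idx m n A. x p) | x :: nat \<times> nat \<Rightarrow> real.
      (\<forall>p\<in>bar_idx m n A. 0 \<le> x p \<and> x p \<le> 2 / (2 ^ snd p * col_min m A (fst p))) \<and>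
      (\<forall>j<m. (\<Sum>p\<in>bar_idx m n A. bar_A m A j p * x p) \<ge> 1)}"
    proof (intro CollectI exI[of _ xb] conjI ballI allI impI refl)
      fix p assume "p \<in> bar_idx m n A"
      then have "fst p < n" by (auto simp: bar_idx_def)
      then have h: "0 \<le> S (fst p)" "S (fst p) \<le> 2 / (2 ^ L (fst p) * col_min m A (fst p))"
        using LS[of "fst p"] by blast+
      have ap: "col_min m A (fst p) > 0"
        using col_bound(1)[of m A "fst p", OF pos[OF \<open>fst p < n\<close>]] .
      then have z: "0 \<le> 2 / (2 ^ snd p * col_min m A (fst p))" by simp
      show "0 \<le> xb p" "xb p \<le> 2 / (2 ^ snd p * col_min m A (fst p))"
        using h z unfolding xb_def by auto
    next
      fix j assume j: "j < m"
      have "1 \<le> (\<Sum>i<n. min (A j i * x i) 1)"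
        using rows j nn x0 by (intro sum_min1) auto
      also have "\<dots> \<le> (\<Sum>i<n. bar_A m A j (i, L i) * S i)"
      proof (rule sum_mono)
        fix i assume "i \<in> {..<n}"
        then have i: "i < n" by simp
        have "A j i = 0 \<or> (col_min m A i \<le> A j i \<and> A j i \<le> 2 ^ col_copies m A i * col_min m A i)"
          using nn[OF j i] col_bound(3)[of m A i, OF pos[OF i] j] by force
        then have "min (A j i * x i) 1 \<le> min (A j i) (2 ^ L i * col_min m A i) * S i"
          using LS[OF i] by blast
        then show "min (A j i * x i) 1 \<le> bar_A m A j (i, L i) * S i"
          by (simp add: bar_A_def)
      qed
      also have "\<dots> = (\<Sum>p\<in>bar_idx m n A. bar_A m A j p * xb p)" by (rule red[symmetric])
      finally show "1 \<le> (\<Sum>p\<in>bar_idx m n A. bar_A m A j p * xb p)" .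
    qed
    have "(\<Sum>p\<in>bar_idx m n A. xb p) = (\<Sum>i<n. S i)" using red[of "\<lambda>_. 1"] by simp
    also have "\<dots> \<le> (\<Sum>i<n. x i)" proof (rule sum_mono)
      fix i assume "i \<in> {..<n}"
      then show "S i \<le> x i" using LS[of i] by blast
    qed
    finally have le: "ereal (\<Sum>p\<in>bar_idx m n A. xb p) \<le> ereal (\<Sum>i<n. x i)" by simp
    show "bar_opt m n A \<le> ereal (\<Sum>i<n. x i)"
      unfolding bar_opt_def using Inf_lower[OF mem] le by (rule order_trans)
  qed
qed
qed

end
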